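(* For every integer $k\ge 1$ and every $\mathbf{PFO}^2$ formula $\phi(y)$ whose only free variable is $y$, there is a $\mathbf{PFO}^2$ formula $\chi_{\ge k}(x)$ with only free variable $x$ such that for every string $w$ and every position $n$: $w,n\models\chi_{\ge k}(x)$ iff there are at least $k$ positions $m<n$ with $w,m\models\phi(y)$. Consequently, for every $k\ge 1$ there is also a $\mathbf{PFO}^2$ formula $\chi_{=k}(x)$ expressing that exactly $k$ positions $m<x$ satisfy $\phi$.
   Context: Formulas of $\mathbf{PFO}^2$ over a finite alphabet $\Sigma$ use only two position variables $x,y$ (which may be re-quantified). Atomic formulas are $\pi_a(z)$ ($a\in\Sigma$, $z\in\{x,y\}$; "position $z$ carries $a$") and $z<z'$. Formulas are closed under $\wedge,\neg$ and under: from $\phi(x,y)$ form $\exists y<x:\phi(x,y)$ and $\exists x<y:\phi(x,y)$; from $\phi(x)$ with only free variable $x$ form $\exists x<y:\phi(x)$ and $\exists x:\phi(x)$; symmetrically with $x,y$ interchanged. On a string $w$ of length $N$, quantified variables range over $\{1,\dots,N\}$, a free variable may be assigned any position in $\{1,\dots,N+1\}$, and $\pi_a(z)$ holds iff $z\le N$ and $w_z=a$. *)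

theory Defs
  imports Main
begin

datatype var = X | Y

text \<open>Raw syntax of two-variable formulas over alphabet 'a.
  ExLess z z' phi stands for (exists z < z' : phi); ExAll z phi for (exists z : phi).\<close>
datatype 'a fo2 =
    Lab 'a var
  | Less var var
  | And "'a fo2" "'a fo2"
  | Neg "'a fo2"
  | ExLess var var "'a fo2"
  | ExAll var "'a fo2"

fun free :: "'a fo2 \<Rightarrow> var set" where
  "free (Lab a z) = {z}"
| "free (Less z z') = {z, z'}"
| "free (And p q) = free p \<union> free q"
| "free (Neg p) = free p"
| "free (ExLess z z' p) = (free p - {z}) \<union> {z'}"
| "free (ExAll z p) = free p - {z}"

inductive pfo2 :: "'a fo2 \<Rightarrow> bool" where
  "pfo2 (Lab a z)"
| "pfo2 (Less z z')"
| "pfo2 p \<Longrightarrow> pfo2 q \<Longrightarrow> pfo2 (And p q)"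
| "pfo2 p \<Longrightarrow> pfo2 (Neg p)"
| "pfo2 p \<Longrightarrow> z \<noteq> z' \<Longrightarrow> pfo2 (ExLess z z' p)"
| "pfo2 p \<Longrightarrow> free p \<subseteq> {z} \<Longrightarrow> pfo2 (ExAll z p)"

text \<open>Semantics on a string w (positions 1..length w, 1-indexed; w_z = w ! (z - 1)).
  The environment e assigns positions in {1..length w + 1} to the variables.\<close>
fun sat :: "'a list \<Rightarrow> (var \<Rightarrow> nat) \<Rightarrow> 'a fo2 \<Rightarrow> bool" where
  "sat w e (Lab a z) = (1 \<le> e z \<and> e z \<le> length w \<and> w ! (e z - 1) = a)"
| "sat w e (Less z z') = (e z < e z')"
| "sat w e (And p q) = (sat w e p \<and> sat w e q)"
| "sat w e (Neg p) = (\<not> sat w e p)"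
| "sat w e (ExLess z z' p) =
     (\<exists>m. 1 \<le> m \<and> m \<le> length w \<and> m < e z' \<and> sat w (e(z := m)) p)"
| "sat w e (ExAll z p) = (\<exists>m. 1 \<le> m \<and> m \<le> length w \<and> sat w (e(z := m)) p)"

definition admissible :: "'a list \<Rightarrow> (var \<Rightarrow> nat) \<Rightarrow> bool" where
  "admissible w e \<longleftrightarrow> (\<forall>v. 1 \<le> e v \<and> e v \<le> length w + 1)"

end

theory Submission
  imports Defs
begin

fun sw :: "var \<Rightarrow> var" where "sw X = Y" | "sw Y = X"

lemma sw_sw[simp]: "sw (sw z) = z" by (cases z) auto
lemma sw_inj[simp]: "(sw a = sw b) = (a = b)" by (metis sw_sw)

fun swp :: "'a fo2 \<Rightarrow> 'a fo2" where
  "swp (Lab a z) = Lab a (sw z)"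
| "swp (Less z z') = Less (sw z) (sw z')"
| "swp (And p q) = And (swp p) (swp q)"
| "swp (Neg p) = Neg (swp p)"
| "swp (ExLess z z' p) = ExLess (sw z) (sw z') (swp p)"
| "swp (ExAll z p) = ExAll (sw z) (swp p)"

lemma upd_sw: "(e(sw z := m)) \<circ> sw = (e \<circ> sw)(z := m)"
  by (rule ext) (metis comp_apply fun_upd_apply sw_sw)

lemma sat_swp: "sat w e (swp p) = sat w (e \<circ> sw) p"
  by (induction p arbitrary: e) (auto simp: upd_sw)

lemma free_swp: "free (swp p) = sw ` free p"
  by (induction p) (auto simp: image_Un image_set_diff[OF injI])

lemma pfo2_swp: "pfo2 p \<Longrightarrow> pfo2 (swp p)"
proof (induction rule: pfo2.induct)
  case (6 p z)
  then show ?case by (auto intro!: pfo2.intros simp: free_swp)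
qed (auto intro: pfo2.intros)

lemma sat_agree: "(\<forall>v\<in>free p. e v = e' v) \<Longrightarrow> sat w e p = sat w e' p"
proof (induction p arbitrary: e e')
  case (ExLess z z' p)
  have "\<And>m. sat w (e(z:=m)) p = sat w (e'(z:=m)) p"
    using ExLess by (intro ExLess.IH) auto
  then show ?case using ExLess.prems by simp
next
  case (ExAll z p)
  have "\<And>m. sat w (e(z:=m)) p = sat w (e'(z:=m)) p"
    using ExAll by (intro ExAll.IH) auto
  then show ?case by simp
next
  case (And p q)
  then show ?case by (metis UnI1 UnI2 free.simps(3) sat.simps(3))
qed auto

fun chi :: "'a fo2 \<Rightarrow> nat \<Rightarrow> 'a fo2" where
  "chi \<phi> 0 = Neg (Less X X)"
| "chi \<phi> (Suc k) = ExLess Y X (And \<phi> (swp (chi \<phi> k)))"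

lemma chi_wf:
  assumes "pfo2 \<phi>" "free \<phi> \<subseteq> {Y}"
  shows "pfo2 (chi \<phi> k) \<and> free (chi \<phi> k) \<subseteq> {X}"
proof (induction k)
  case 0 then show ?case by (auto intro: pfo2.intros)
next
  case (Suc k)
  then show ?case using assms
    by (auto intro!: pfo2.intros pfo2_swp simp: free_swp)
qed

lemma comb:
  fixes A :: "nat set"
  assumes "finite A"
  shows "(\<exists>m\<in>A. m < n \<and> k \<le> card {x\<in>A. x < m}) \<longleftrightarrow> Suc k \<le> card {x\<in>A. x < n}"
proof
  assume "\<exists>m\<in>A. m < n \<and> k \<le> card {x\<in>A. x < m}"
  then obtain m where m: "m \<in> A" "m < n" "k \<le> card {x\<in>A. x < m}" by blast
  have "insert m {x\<in>A. x < m} \<subseteq> {x\<in>A. x < n}" using m by auto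
  moreover have "finite {x\<in>A. x < n}" using assms by auto
  ultimately have "card (insert m {x\<in>A. x < m}) \<le> card {x\<in>A. x < n}"
    by (rule card_mono[rotated])
  moreover have "card (insert m {x\<in>A. x < m}) = Suc (card {x\<in>A. x < m})"
    using assms by simp
  ultimately show "Suc k \<le> card {x\<in>A. x < n}" using m by simp
next
  assume h: "Suc k \<le> card {x\<in>A. x < n}"
  define B where "B = {x\<in>A. x < n}"
  have fB: "finite B" using assms B_def by auto
  have neB: "B \<noteq> {}" using h B_def by (metis card.empty not_less_eq_eq zero_le)
  define m where "m = Max B"
  have mB: "m \<in> B" using fB neB m_def by simp
  have "B - {m} \<subseteq> {x\<in>A. x < m}"
  proof
    fix x assume "x \<in> B - {m}"
    then have "x \<in> B" "x \<noteq> m" by auto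
    then have "x \<le> m" using fB m_def by simp
    then show "x \<in> {x\<in>A. x < m}" using \<open>x \<in> B\<close> \<open>x \<noteq> m\<close> B_def by auto
  qed
  then have "card (B - {m}) \<le> card {x\<in>A. x < m}"
    using assms by (intro card_mono) auto
  moreover have "card (B - {m}) = card B - 1" using mB fB by simp
  ultimately show "\<exists>m\<in>A. m < n \<and> k \<le> card {x\<in>A. x < m}"
    using mB h B_def by (intro bexI[of _ m]) auto
qed

lemma chi_sem:
  assumes "free \<phi> \<subseteq> {Y}"
  shows "sat w e (chi \<phi> k) \<longleftrightarrow>
    k \<le> card {x \<in> {m. 1 \<le> m \<and> m \<le> length w \<and> sat w (\<lambda>_. m) \<phi>}. x < e X}"
proof (induction k arbitrary: e)
  case 0 then show ?case by simp
next
  case (Suc k)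
  let ?A = "{m. 1 \<le> m \<and> m \<le> length w \<and> sat w (\<lambda>_. m) \<phi>}"
  have fA: "finite ?A" by (rule finite_subset[of _ "{..length w}"]) auto
  have ag: "\<And>m. sat w (e(Y := m)) \<phi> = sat w (\<lambda>_. m) \<phi>"
    using assms by (intro sat_agree) auto
  have "sat w e (chi \<phi> (Suc k)) \<longleftrightarrow>
     (\<exists>m. 1 \<le> m \<and> m \<le> length w \<and> m < e X \<and> sat w (\<lambda>_. m) \<phi> \<and>
        k \<le> card {x \<in> ?A. x < m})"
  proof -
    have "\<And>m. sat w (e(Y := m) \<circ> sw) (chi \<phi> k) \<longleftrightarrow> k \<le> card {x \<in> ?A. x < m}"
      using Suc.IH by simp
    then show ?thesis by (simp add: sat_swp ag del: fun_upd_apply)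
  qed
  also have "\<dots> \<longleftrightarrow> (\<exists>m\<in>?A. m < e X \<and> k \<le> card {x \<in> ?A. x < m})" by auto
  also have "\<dots> \<longleftrightarrow> Suc k \<le> card {x \<in> ?A. x < e X}" by (rule comb[OF fA])
  finally show ?case .
qed

lemma set_eq:
  assumes "admissible w e" "free \<phi> \<subseteq> {Y}"
  shows "{m. 1 \<le> m \<and> m < e X \<and> sat w (e(Y := m)) \<phi>} =
    {x \<in> {m. 1 \<le> m \<and> m \<le> length w \<and> sat w (\<lambda>_. m) \<phi>}. x < e X}"
proof -
  have ag: "\<And>m. sat w (e(Y := m)) \<phi> = sat w (\<lambda>_. m) \<phi>"
    using assms by (intro sat_agree) auto
  have "e X \<le> length w + 1" using assms(1) unfolding admissible_def by blast
  then show ?thesis using ag by auto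
qed

theorem mainTheorem4:
  fixes k :: nat and \<phi> :: "'a fo2"
  assumes "k \<ge> 1" and "pfo2 \<phi>" and "free \<phi> \<subseteq> {Y}"
  shows "(\<exists>\<chi>. pfo2 \<chi> \<and> free \<chi> \<subseteq> {X} \<and>
            (\<forall>(w :: 'a list) e. admissible w e \<longrightarrow>
               (sat w e \<chi> \<longleftrightarrow> k \<le> card {m. 1 \<le> m \<and> m < e X \<and> sat w (e(Y := m)) \<phi>})))
       \<and> (\<exists>\<chi>. pfo2 \<chi> \<and> free \<chi> \<subseteq> {X} \<and>
            (\<forall>(w :: 'a list) e. admissible w e \<longrightarrow>
               (sat w e \<chi> \<longleftrightarrow> card {m. 1 \<le> m \<and> m < e X \<and> sat w (e(Y := m)) \<phi>} = k)))"
proof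
  show "\<exists>\<chi>. pfo2 \<chi> \<and> free \<chi> \<subseteq> {X} \<and>
            (\<forall>(w :: 'a list) e. admissible w e \<longrightarrow>
               (sat w e \<chi> \<longleftrightarrow> k \<le> card {m. 1 \<le> m \<and> m < e X \<and> sat w (e(Y := m)) \<phi>}))"
    using chi_wf[OF assms(2,3), of k] chi_sem[OF assms(3)] set_eq[OF _ assms(3)]
    by (intro exI[of _ "chi \<phi> k"]) auto
  show "\<exists>\<chi>. pfo2 \<chi> \<and> free \<chi> \<subseteq> {X} \<and>
            (\<forall>(w :: 'a list) e. admissible w e \<longrightarrow>
               (sat w e \<chi> \<longleftrightarrow> card {m. 1 \<le> m \<and> m < e X \<and> sat w (e(Y := m)) \<phi>} = k))"
  proof (intro exI[of _ "And (chi \<phi> k) (Neg (chi \<phi> (Suc k)))"] conjI allI impI)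
    show "pfo2 (And (chi \<phi> k) (Neg (chi \<phi> (Suc k))))"
      using chi_wf[OF assms(2,3), of k] chi_wf[OF assms(2,3), of "Suc k"]
      by (auto intro!: pfo2.intros)
    show "free (And (chi \<phi> k) (Neg (chi \<phi> (Suc k)))) \<subseteq> {X}"
      using chi_wf[OF assms(2,3), of k] chi_wf[OF assms(2,3), of "Suc k"] by simp
    fix w :: "'a list" and e assume ad: "admissible w e"
    show "sat w e (And (chi \<phi> k) (Neg (chi \<phi> (Suc k)))) \<longleftrightarrow>
       card {m. 1 \<le> m \<and> m < e X \<and> sat w (e(Y := m)) \<phi>} = k"
      unfolding set_eq[OF ad assms(3)] sat.simps chi_sem[OF assms(3)] by linarith
  qed
qed

end
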